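(* Let $G$ be a finitely generated free abelian group and $N$ a $\mathbb{Z}[G]$-module admitting two injective presentations $0\to\mathbb{Z}[G]^a\xrightarrow{P}\mathbb{Z}[G]^b\xrightarrow{\pi}N\to0$ and $0\to\mathbb{Z}[G]^{a'}\xrightarrow{P'}\mathbb{Z}[G]^{b'}\xrightarrow{\pi'}N\to0$ with $b-a=b'-a'=d$. For $u_1,\dots,u_d\in N$ set $\mathcal{A}_P(u_1\wedge\cdots\wedge u_d)=\det[P\,|\,\bar u_1\cdots\bar u_d]\in\mathbb{Z}[G]$ with $\pi(\bar u_j)=u_j$, and similarly $\mathcal{A}_{P'}$. Then $\mathcal{A}_P$ does not depend on the lifts $\bar u_j$, and there is a single element $\epsilon g\in\pm G\subset\mathbb{Z}[G]$ with $\mathcal{A}_{P'}=\epsilon g\cdot\mathcal{A}_P$ on all of $\wedge^d_{\mathbb{Z}[G]}N$. In particular, for a connected sutured cobordism $(Y,\Gamma)$ with $H_2(\overline Y,\overline R^+)=0$, the $\mathbb{Z}[G]$-valued Alexander function on $\wedge^d_{\mathbb{Z}[G]}H_1(\overline Y,\overline R^+)$, $d=-\chi(Y,R^+)$, depends up to global multiplication by $\pm G$ only on the module $H_1(\overline Y,\overline R^+)$ and $d$.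
   Context: For a connected sutured cobordism $(Y,\Gamma)$ (compact oriented 3-manifold whose boundary contains the incoming/outgoing surfaces and regions $R^+,R^-$), $G=H_1(Y)/\mathrm{tors}(H_1(Y))$, $p\colon\overline Y\to Y$ is the maximal free abelian cover (deck group $G$), $\overline R^+=p^{-1}(R^+)$, and $H_1(\overline Y,\overline R^+)$ is a $\mathbb{Z}[G]$-module; when $H_2(\overline Y,\overline R^+)=0$ it admits an injective presentation matrix of deficiency $d$ (coming from a relative CW structure with $a$ 2-cells and $b$ 1-cells, $b-a=d$), and the Alexander function $\mathcal{A}^{\mathbb{Z}[G]}_{Y,\Gamma}$ is $\mathcal{A}_P$ for such $P$ (and $0$ if $H_2(\overline Y,\overline R^+)\neq0$). An injective presentation of deficiency $d$ is an exact sequence as in the claim with $b-a=d$. *)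

theory Defs
  imports "HOL-Library.Poly_Mapping" "Jordan_Normal_Form.Determinant"
begin

text \<open>The group ring Z[G] of the free abelian group G = Z^n, where n = CARD('n):
  finitely supported functions G -> int with convolution product.\<close>
type_synonym 'n grpring = "(('n \<Rightarrow>\<^sub>0 int) \<Rightarrow>\<^sub>0 int)"

text \<open>An injective presentation 0 -> R^a --P--> R^b --pi--> N -> 0 of the R-module N
  (scalar multiplication sN), with P a b x a matrix acting on column vectors.\<close>
definition injective_presentation ::
  "('r::comm_ring_1 \<Rightarrow> 'm::ab_group_add \<Rightarrow> 'm) \<Rightarrow> 'r mat \<Rightarrow> nat \<Rightarrow> nat \<Rightarrow> ('r vec \<Rightarrow> 'm) \<Rightarrow> bool"
  where "injective_presentation sN P a b \<pi> \<longleftrightarrow>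
     P \<in> carrier_mat b a \<and>
     (\<forall>v \<in> carrier_vec a. P *\<^sub>v v = 0\<^sub>v b \<longrightarrow> v = 0\<^sub>v a) \<and>
     (\<forall>v \<in> carrier_vec b. \<forall>w \<in> carrier_vec b. \<pi> (v + w) = \<pi> v + \<pi> w) \<and>
     (\<forall>r. \<forall>v \<in> carrier_vec b. \<pi> (r \<cdot>\<^sub>v v) = sN r (\<pi> v)) \<and>
     \<pi> ` carrier_vec b = UNIV \<and>
     {v \<in> carrier_vec b. \<pi> v = 0} = (\<lambda>x. P *\<^sub>v x) ` carrier_vec a"

definition is_lift :: "('r vec \<Rightarrow> 'm) \<Rightarrow> nat \<Rightarrow> nat \<Rightarrow> (nat \<Rightarrow> 'm) \<Rightarrow> (nat \<Rightarrow> 'r vec) \<Rightarrow> bool"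
  where "is_lift \<pi> b d u ubar \<longleftrightarrow> (\<forall>j<d. ubar j \<in> carrier_vec b \<and> \<pi> (ubar j) = u j)"

definition det_augmented :: "'r::comm_ring_1 mat \<Rightarrow> nat \<Rightarrow> nat \<Rightarrow> (nat \<Rightarrow> 'r vec) \<Rightarrow> 'r"
  where "det_augmented P a b ubar =
     det (mat b b (\<lambda>(i, j). if j < a then P $$ (i, j) else ubar (j - a) $ i))"

definition alexander_fun ::
  "'r::comm_ring_1 mat \<Rightarrow> ('r vec \<Rightarrow> 'm) \<Rightarrow> nat \<Rightarrow> nat \<Rightarrow> nat \<Rightarrow> (nat \<Rightarrow> 'm) \<Rightarrow> 'r"
  where "alexander_fun P \<pi> a b d u = det_augmented P a b (SOME ubar. is_lift \<pi> b d u ubar)"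

end

theory Submission
  imports Defs
begin


lemma exists_max_on:
  fixes f :: "'a \<Rightarrow> 'b::linorder"
  assumes "finite S" "S \<noteq> {}"
  shows "\<exists>x\<in>S. \<forall>y\<in>S. f y \<le> f x"
proof -
  have "Max (f ` S) \<in> f ` S" using assms by simp
  then obtain x where x: "x \<in> S" "f x = Max (f ` S)" by auto
  show ?thesis using x assms by (intro bexI[of _ x]) auto
qed

lemma top_coeff:
  fixes \<kappa> :: "'k::comm_monoid_add \<Rightarrow> 'L::linordered_ab_group_add"
    and p q :: "'k \<Rightarrow>\<^sub>0 int"
  assumes add: "\<And>x y. \<kappa> (x+y) = \<kappa> x + \<kappa> y" and inj: "inj \<kappa>"
    and hp: "\<forall>a\<in>Poly_Mapping.keys p. \<kappa> a \<le> \<kappa> aM" and hq: "\<forall>b\<in>Poly_Mapping.keys q. \<kappa> b \<le> \<kappa> bM"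
  shows "Poly_Mapping.lookup (p * q) (aM + bM) = Poly_Mapping.lookup p aM * Poly_Mapping.lookup q bM"
proof -
  define p1 where "p1 = p - Poly_Mapping.single aM (Poly_Mapping.lookup p aM)"
  define q1 where "q1 = q - Poly_Mapping.single bM (Poly_Mapping.lookup q bM)"
  have kp1: "Poly_Mapping.keys p1 \<subseteq> Poly_Mapping.keys p - {aM}"
    by (auto simp: p1_def in_keys_iff lookup_minus lookup_single when_def split: if_splits)
  have kq1: "Poly_Mapping.keys q1 \<subseteq> Poly_Mapping.keys q - {bM}"
    by (auto simp: q1_def in_keys_iff lookup_minus lookup_single when_def split: if_splits)
  have pq: "p * q = Poly_Mapping.single aM (Poly_Mapping.lookup p aM) * Poly_Mapping.single bM (Poly_Mapping.lookup q bM)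
     + Poly_Mapping.single aM (Poly_Mapping.lookup p aM) * q1 + p1 * q"
  proof -
    have hp: "p = Poly_Mapping.single aM (Poly_Mapping.lookup p aM) + p1" by (simp add: p1_def)
    have hq: "q = Poly_Mapping.single bM (Poly_Mapping.lookup q bM) + q1" by (simp add: q1_def)
    have "p * q = Poly_Mapping.single aM (Poly_Mapping.lookup p aM) * q + p1 * q"
      by (subst hp) (simp only: distrib_right)
    also have "Poly_Mapping.single aM (Poly_Mapping.lookup p aM) * q = Poly_Mapping.single aM (Poly_Mapping.lookup p aM) * Poly_Mapping.single bM (Poly_Mapping.lookup q bM)
     + Poly_Mapping.single aM (Poly_Mapping.lookup p aM) * q1"
      by (subst hq) (simp only: distrib_left)
    finally show ?thesis .
  qed
  have z1: "Poly_Mapping.lookup (Poly_Mapping.single aM (Poly_Mapping.lookup p aM) * q1) (aM + bM) = 0"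
  proof (rule ccontr)
    assume "Poly_Mapping.lookup (Poly_Mapping.single aM (Poly_Mapping.lookup p aM) * q1) (aM + bM) \<noteq> 0"
    hence "aM + bM \<in> Poly_Mapping.keys (Poly_Mapping.single aM (Poly_Mapping.lookup p aM) * q1)" by (simp add: in_keys_iff)
    with keys_mult obtain a b where "a \<in> Poly_Mapping.keys (Poly_Mapping.single aM (Poly_Mapping.lookup p aM))" "b \<in> Poly_Mapping.keys q1"
      "aM + bM = a + b" by blast
    hence "a = aM" "b \<in> Poly_Mapping.keys q1" "aM + bM = aM + b" by (auto split: if_splits)
    hence "\<kappa> b = \<kappa> bM" using add[of aM bM] add[of aM b] by simp
    hence "b = bM" using inj by (auto dest: injD)
    with \<open>b \<in> Poly_Mapping.keys q1\<close> kq1 show False by auto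
  qed
  have z2: "Poly_Mapping.lookup (p1 * q) (aM + bM) = 0"
  proof (rule ccontr)
    assume "Poly_Mapping.lookup (p1 * q) (aM + bM) \<noteq> 0"
    hence "aM + bM \<in> Poly_Mapping.keys (p1 * q)" by (simp add: in_keys_iff)
    with keys_mult obtain a b where ab: "a \<in> Poly_Mapping.keys p1" "b \<in> Poly_Mapping.keys q" "aM + bM = a + b" by blast
    have "\<kappa> a \<le> \<kappa> aM" using ab kp1 hp by auto
    moreover have "\<kappa> a \<noteq> \<kappa> aM" using ab kp1 inj by (auto dest: injD)
    ultimately have "\<kappa> a < \<kappa> aM" by simp
    moreover have "\<kappa> b \<le> \<kappa> bM" using ab hq by auto
    ultimately have "\<kappa> a + \<kappa> b < \<kappa> aM + \<kappa> bM" by (rule add_less_le_mono)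
    moreover have "\<kappa> aM + \<kappa> bM = \<kappa> a + \<kappa> b" using ab(3) add by metis
    ultimately show False by simp
  qed
  show ?thesis unfolding pq lookup_add z1 z2 mult_single by simp
qed

lemma unit_single:
  fixes \<kappa> :: "'k::comm_monoid_add \<Rightarrow> 'L::linordered_ab_group_add"
    and c e :: "'k \<Rightarrow>\<^sub>0 int"
  assumes add: "\<And>x y. \<kappa> (x+y) = \<kappa> x + \<kappa> y" and inj: "inj \<kappa>"
    and ce: "c * e = 1"
  shows "\<exists>g \<epsilon>. (\<epsilon> = 1 \<or> \<epsilon> = -1) \<and> c = Poly_Mapping.single g \<epsilon>"
proof -
  have k0: "\<kappa> 0 = 0" using add[of 0 0] by simp
  have add': "\<And>x y. - \<kappa> (x+y) = - \<kappa> x + - \<kappa> y" using add by simp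
  have inj': "inj (\<lambda>x. - \<kappa> x)" using inj by (auto simp: inj_def)
  have c0: "c \<noteq> 0" and e0: "e \<noteq> 0" using ce by auto
  hence kc: "Poly_Mapping.keys c \<noteq> {}" and ke: "Poly_Mapping.keys e \<noteq> {}" by auto
  obtain aM where aM: "aM \<in> Poly_Mapping.keys c" "\<forall>a\<in>Poly_Mapping.keys c. \<kappa> a \<le> \<kappa> aM"
    using exists_max_on[OF finite_keys kc, of \<kappa>] by blast
  obtain bM where bM: "bM \<in> Poly_Mapping.keys e" "\<forall>a\<in>Poly_Mapping.keys e. \<kappa> a \<le> \<kappa> bM"
    using exists_max_on[OF finite_keys ke, of \<kappa>] by blast
  obtain am where am: "am \<in> Poly_Mapping.keys c" "\<forall>a\<in>Poly_Mapping.keys c. - \<kappa> a \<le> - \<kappa> am"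
    using exists_max_on[OF finite_keys kc, of "\<lambda>x. - \<kappa> x"] by blast
  obtain bm where bm: "bm \<in> Poly_Mapping.keys e" "\<forall>a\<in>Poly_Mapping.keys e. - \<kappa> a \<le> - \<kappa> bm"
    using exists_max_on[OF finite_keys ke, of "\<lambda>x. - \<kappa> x"] by blast
  have t1: "Poly_Mapping.lookup (c * e) (aM + bM) = Poly_Mapping.lookup c aM * Poly_Mapping.lookup e bM"
    by (rule top_coeff[OF add inj aM(2) bM(2)])
  have t2: "Poly_Mapping.lookup (c * e) (am + bm) = Poly_Mapping.lookup c am * Poly_Mapping.lookup e bm"
    by (rule top_coeff[OF add' inj' am(2) bm(2)])
  have "Poly_Mapping.lookup c aM * Poly_Mapping.lookup e bM \<noteq> 0" using aM bM by (simp add: in_keys_iff)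
  hence s1: "aM + bM = 0" using t1 ce by (auto simp: lookup_one when_def split: if_splits)
  have "Poly_Mapping.lookup c am * Poly_Mapping.lookup e bm \<noteq> 0" using am bm by (simp add: in_keys_iff)
  hence s2: "am + bm = 0" using t2 ce by (auto simp: lookup_one when_def split: if_splits)
  have e1: "\<kappa> aM + \<kappa> bM = 0" using s1 add k0 by metis
  have e2: "\<kappa> am + \<kappa> bm = 0" using s2 add k0 by metis
  have l1: "\<kappa> am \<le> \<kappa> aM" and l2: "\<kappa> bm \<le> \<kappa> bM" using aM am bM bm by auto
  have eq: "\<kappa> am = \<kappa> aM"
  proof (rule ccontr)
    assume "\<kappa> am \<noteq> \<kappa> aM"
    with l1 have "\<kappa> am < \<kappa> aM" by simp
    hence "\<kappa> am + \<kappa> bm < \<kappa> aM + \<kappa> bM" using l2 by (rule add_less_le_mono)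
    with e1 e2 show False by simp
  qed
  have keq: "\<forall>a\<in>Poly_Mapping.keys c. a = aM"
  proof
    fix a assume a: "a \<in> Poly_Mapping.keys c"
    have "\<kappa> a = \<kappa> aM" using aM(2) am(2) a eq by (metis neg_le_iff_le order_antisym)
    thus "a = aM" using inj by (auto dest: injD)
  qed
  have eq2: "\<kappa> bm = \<kappa> bM" using eq e1 e2 by (metis add_left_cancel)
  have keq2: "\<forall>a\<in>Poly_Mapping.keys e. a = bM"
  proof
    fix a assume a: "a \<in> Poly_Mapping.keys e"
    have "\<kappa> a = \<kappa> bM" using bM(2) bm(2) a eq2 by (metis neg_le_iff_le order_antisym)
    thus "a = bM" using inj by (auto dest: injD)
  qed
  define ca where "ca = Poly_Mapping.lookup c aM"
  define eb where "eb = Poly_Mapping.lookup e bM"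
  have cs: "c = Poly_Mapping.single aM ca"
    unfolding ca_def
    by (rule poly_mapping_eqI) (metis in_keys_iff keq lookup_single_eq lookup_single_not_eq)
  have es: "e = Poly_Mapping.single bM eb"
    unfolding eb_def
    by (rule poly_mapping_eqI) (metis in_keys_iff keq2 lookup_single_eq lookup_single_not_eq)
  have "c * e = Poly_Mapping.single (aM + bM) (ca * eb)"
    by (simp only: cs es mult_single)
  hence "Poly_Mapping.single (aM + bM) (ca * eb) = 1" using ce by simp
  hence "Poly_Mapping.lookup (Poly_Mapping.single (aM + bM) (ca * eb)) (aM + bM) = Poly_Mapping.lookup 1 (aM + bM)" by simp
  hence "ca * eb = 1" using s1 by simp
  hence "ca = 1 \<or> ca = -1" using zmult_eq_1_iff by blast
  thus ?thesis using cs by blast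
qed



definition enum_fin :: "nat \<Rightarrow> 'n::finite" where
  "enum_fin = (SOME h. bij_betw h {0..<card (UNIV :: 'n set)} (UNIV :: 'n set))"

lemma enum_fin_bij: "bij_betw (enum_fin :: nat \<Rightarrow> 'n::finite) {0..<card (UNIV :: 'n set)} UNIV"
proof -
  have "\<exists>h. bij_betw h {0..<card (UNIV :: 'n set)} (UNIV :: 'n set)"
    using ex_bij_betw_nat_finite[of "UNIV :: 'n set"] by simp
  thus ?thesis unfolding enum_fin_def by (rule someI_ex)
qed

definition kappa :: "('n::finite \<Rightarrow>\<^sub>0 int) \<Rightarrow> (nat \<Rightarrow>\<^sub>0 int)" where
  "kappa g = Abs_poly_mapping (\<lambda>k. if k < card (UNIV :: 'n set) then Poly_Mapping.lookup g (enum_fin k) else 0)"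

lemma lookup_kappa: "Poly_Mapping.lookup (kappa (g :: 'n::finite \<Rightarrow>\<^sub>0 int)) =
   (\<lambda>k. if k < card (UNIV :: 'n set) then Poly_Mapping.lookup g (enum_fin k) else 0)"
proof -
  have "finite {k. (if k < card (UNIV :: 'n set) then Poly_Mapping.lookup g (enum_fin k) else 0) \<noteq> 0}"
    by (rule finite_subset[of _ "{..<card (UNIV :: 'n set)}"]) (auto split: if_splits)
  thus ?thesis unfolding kappa_def by simp
qed

lemma kappa_add: "kappa (x + y) = kappa x + kappa (y :: 'n::finite \<Rightarrow>\<^sub>0 int)"
  by (rule poly_mapping_eqI) (simp add: lookup_kappa lookup_add)

lemma kappa_inj: "inj (kappa :: ('n::finite \<Rightarrow>\<^sub>0 int) \<Rightarrow> _)"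
proof (rule injI)
  fix x y :: "'n \<Rightarrow>\<^sub>0 int"
  assume "kappa x = kappa y"
  hence h: "\<And>k. k < card (UNIV :: 'n set) \<Longrightarrow> Poly_Mapping.lookup x (enum_fin k) = Poly_Mapping.lookup y (enum_fin k)"
    by (metis lookup_kappa)
  show "x = y"
  proof (rule poly_mapping_eqI)
    fix g :: 'n
    have "g \<in> enum_fin ` {0..<card (UNIV :: 'n set)}" using enum_fin_bij[where 'n='n] by (simp add: bij_betw_def)
    then obtain k where "k < card (UNIV :: 'n set)" "g = enum_fin k" by auto
    thus "Poly_Mapping.lookup x g = Poly_Mapping.lookup y g" using h by simp
  qed
qed

lemma grpring_unit:
  fixes c e :: "'n::finite grpring"
  assumes "c * e = 1"
  shows "\<exists>g \<epsilon>. (\<epsilon> = 1 \<or> \<epsilon> = -1) \<and> c = Poly_Mapping.single g \<epsilon>"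
  by (rule unit_single[OF kappa_add kappa_inj assms])



lemma BD1:
  fixes X :: "'r::comm_ring_1 mat"
  assumes X: "X \<in> carrier_mat k k"
  shows "det (four_block_mat X (0\<^sub>m k d) (0\<^sub>m d k) (1\<^sub>m d)) = det X"
proof (induction d)
  case 0
  have "four_block_mat X (0\<^sub>m k 0) (0\<^sub>m 0 k) (1\<^sub>m 0) = X"
    using X by (intro eq_matI) auto
  thus ?case by simp
next
  case (Suc d)
  let ?M = "four_block_mat X (0\<^sub>m k d) (0\<^sub>m d k) (1\<^sub>m d)"
  have M: "?M \<in> carrier_mat (k+d) (k+d)" using X by auto
  have "four_block_mat X (0\<^sub>m k (Suc d)) (0\<^sub>m (Suc d) k) (1\<^sub>m (Suc d))
      = four_block_mat ?M (0\<^sub>m (k+d) 1) (0\<^sub>m 1 (k+d)) (1\<^sub>m 1)"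
    using X by (intro eq_matI) auto
  also have "det \<dots> = det ?M * det (1\<^sub>m 1 :: 'r mat)"
    by (rule det_four_block_mat_upper_right_zero_col[OF M]) auto
  finally show ?case using Suc by simp
qed

lemma BD2:
  fixes M :: "'r::comm_ring_1 mat"
  assumes M: "M \<in> carrier_mat n n"
  shows "det (four_block_mat (1\<^sub>m k) (0\<^sub>m k n) (0\<^sub>m n k) M) = det M"
proof (induction k)
  case 0
  have "four_block_mat (1\<^sub>m 0) (0\<^sub>m 0 n) (0\<^sub>m n 0) M = M"
    using M by (intro eq_matI) auto
  thus ?case by simp
next
  case (Suc k)
  let ?M = "four_block_mat (1\<^sub>m k) (0\<^sub>m k n) (0\<^sub>m n k) M"
  have MM: "?M \<in> carrier_mat (k+n) (k+n)" using M by auto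
  have "four_block_mat (1\<^sub>m (Suc k)) (0\<^sub>m (Suc k) n) (0\<^sub>m n (Suc k)) M
      = four_block_mat (1\<^sub>m 1) (0\<^sub>m 1 (k+n)) (0\<^sub>m (k+n) 1) ?M"
    using M by (intro eq_matI) auto
  also have "det \<dots> = det (1\<^sub>m 1 :: 'r mat) * det ?M"
    by (rule det_four_block_mat_lower_left_zero_col[OF _ _ _ MM]) auto
  finally show ?case using Suc by simp
qed

lemma UT:
  fixes Z :: "'r::comm_ring_1 mat"
  assumes Z: "Z \<in> carrier_mat k d"
  shows "det (four_block_mat (1\<^sub>m k) Z (0\<^sub>m d k) (1\<^sub>m d)) = 1"
proof -
  let ?M = "four_block_mat (1\<^sub>m k) Z (0\<^sub>m d k) (1\<^sub>m d)"
  have M: "?M \<in> carrier_mat (k+d) (k+d)" using Z by auto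
  have ut: "upper_triangular ?M" using Z unfolding upper_triangular_def by auto
  have "diag_mat ?M = replicate (k+d) 1"
    using Z by (intro nth_equalityI) (auto simp: diag_mat_def)
  thus ?thesis using det_upper_triangular[OF ut M] by simp
qed

lemma detE:
  fixes X :: "'r::comm_ring_1 mat"
  assumes X: "X \<in> carrier_mat k k" and Z: "Z \<in> carrier_mat k d"
  shows "det (four_block_mat X Z (0\<^sub>m d k) (1\<^sub>m d)) = det X"
proof -
  have "four_block_mat X Z (0\<^sub>m d k) (1\<^sub>m d) =
     four_block_mat (1\<^sub>m k) Z (0\<^sub>m d k) (1\<^sub>m d) * four_block_mat X (0\<^sub>m k d) (0\<^sub>m d k) (1\<^sub>m d)"
  proof -
    have c: "1\<^sub>m k \<in> carrier_mat k k" "Z \<in> carrier_mat k d" "(0\<^sub>m d k :: 'r mat) \<in> carrier_mat d k"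
      "(1\<^sub>m d :: 'r mat) \<in> carrier_mat d d" "X \<in> carrier_mat k k" "(0\<^sub>m k d :: 'r mat) \<in> carrier_mat k d"
      "(0\<^sub>m d k :: 'r mat) \<in> carrier_mat d k" "(1\<^sub>m d :: 'r mat) \<in> carrier_mat d d" using X Z by auto
    show ?thesis using X Z by (subst mult_four_block_mat[OF c]) auto
  qed
  also have "det \<dots> = det X"
    using X Z by (subst det_mult[of _ "k+d"]) (auto simp: UT BD1)
  finally show ?thesis .
qed



definition augm :: "nat \<Rightarrow> nat \<Rightarrow> 'r mat \<Rightarrow> (nat \<Rightarrow> 'r vec) \<Rightarrow> 'r mat" where
  "augm k m Q W = mat m m (\<lambda>(i, j). if j < k then Q $$ (i, j) else W (j - k) $ i)"

lemma det_augmented_augm: "det_augmented P a b U = det (augm a b P U)"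
  unfolding det_augmented_def augm_def ..

definition wmat :: "nat \<Rightarrow> nat \<Rightarrow> (nat \<Rightarrow> 'r vec) \<Rightarrow> 'r mat" where
  "wmat m d W = mat m d (\<lambda>(i, j). W j $ i)"

lemma aug_four:
  fixes Q :: "'r::comm_ring_1 mat"
  assumes Q: "Q \<in> carrier_mat m k" and km: "k \<le> m"
  shows "augm k m Q W = four_block_mat Q (wmat m (m-k) W) (0\<^sub>m 0 k) (0\<^sub>m 0 (m-k))"
  using Q km by (intro eq_matI) (auto simp: augm_def wmat_def)

lemma vec_add_diff: "v \<in> carrier_vec n \<Longrightarrow> w \<in> carrier_vec n \<Longrightarrow> v + (w - v) = (w :: 'a::ab_group_add vec)"
  by (intro eq_vecI) auto

lemma core:
  fixes Q1 X :: "'r::comm_ring_1 mat" and \<rho> :: "'r vec \<Rightarrow> 'm::ab_group_add"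
  assumes Q1: "Q1 \<in> carrier_mat m k" and X: "X \<in> carrier_mat k k" and km: "k \<le> m"
    and ker: "\<And>v. v \<in> carrier_vec m \<Longrightarrow> \<rho> v = 0 \<Longrightarrow> \<exists>x\<in>carrier_vec k. v = Q1 *\<^sub>v x"
    and add: "\<And>v w. v \<in> carrier_vec m \<Longrightarrow> w \<in> carrier_vec m \<Longrightarrow> \<rho> (v + w) = \<rho> v + \<rho> w"
    and W: "\<And>j. j < m - k \<Longrightarrow> W1 j \<in> carrier_vec m \<and> W2 j \<in> carrier_vec m \<and> \<rho> (W1 j) = \<rho> (W2 j)"
  shows "det (augm k m (Q1 * X) W2) = det X * det (augm k m Q1 W1)"
proof -
  define d where "d = m - k"
  have ex: "\<exists>x. x \<in> carrier_vec k \<and> W2 j - W1 j = Q1 *\<^sub>v x" if j: "j < d" for j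
  proof -
    have c: "W1 j \<in> carrier_vec m" "W2 j \<in> carrier_vec m" "\<rho> (W1 j) = \<rho> (W2 j)" using W j d_def by auto
    have "\<rho> (W1 j + (W2 j - W1 j)) = \<rho> (W1 j) + \<rho> (W2 j - W1 j)" using c by (intro add) auto
    hence "\<rho> (W2 j - W1 j) = 0" using c vec_add_diff[OF c(1,2)] by simp
    then obtain x where "x \<in> carrier_vec k" "W2 j - W1 j = Q1 *\<^sub>v x" using ker[of "W2 j - W1 j"] c by auto
    thus ?thesis by blast
  qed
  define z where "z j = (SOME x. x \<in> carrier_vec k \<and> W2 j - W1 j = Q1 *\<^sub>v x)" for j
  have z: "z j \<in> carrier_vec k" "W2 j - W1 j = Q1 *\<^sub>v z j" if "j < d" for j
    using someI_ex[OF ex[OF that]] unfolding z_def by auto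
  define Z where "Z = mat k d (\<lambda>(i, j). z j $ i)"
  have Z: "Z \<in> carrier_mat k d" unfolding Z_def by simp
  have colZ: "col Z j = z j" if "j < d" for j
    using z(1)[OF that] that unfolding Z_def by (intro eq_vecI) auto
  define E where "E = four_block_mat X Z (0\<^sub>m d k) (1\<^sub>m d)"
  have W1m: "wmat m d W1 \<in> carrier_mat m d" unfolding wmat_def by simp
  have c: "Q1 \<in> carrier_mat m k" "wmat m d W1 \<in> carrier_mat m d" "(0\<^sub>m 0 k :: 'r mat) \<in> carrier_mat 0 k"
      "(0\<^sub>m 0 d :: 'r mat) \<in> carrier_mat 0 d" "X \<in> carrier_mat k k" "Z \<in> carrier_mat k d"
      "(0\<^sub>m d k :: 'r mat) \<in> carrier_mat d k" "(1\<^sub>m d :: 'r mat) \<in> carrier_mat d d" using Q1 X Z W1m by auto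
  have prod: "augm k m Q1 W1 * E = four_block_mat (Q1 * X) (Q1 * Z + wmat m d W1) (0\<^sub>m 0 k) (0\<^sub>m 0 d)"
    unfolding aug_four[OF Q1 km] E_def d_def[symmetric]
    by (subst mult_four_block_mat[OF c]) (use Q1 X Z W1m in auto)
  have eq: "augm k m (Q1 * X) W2 = augm k m Q1 W1 * E"
    unfolding prod
  proof (intro eq_matI)
    fix i j assume i: "i < dim_row (four_block_mat (Q1 * X) (Q1 * Z + wmat m d W1) (0\<^sub>m 0 k) (0\<^sub>m 0 d))"
      and j: "j < dim_col (four_block_mat (Q1 * X) (Q1 * Z + wmat m d W1) (0\<^sub>m 0 k) (0\<^sub>m 0 d))"
    have im: "i < m" and jm: "j < k + d" using i j Q1 X by auto
    show "augm k m (Q1 * X) W2 $$ (i, j) = four_block_mat (Q1 * X) (Q1 * Z + wmat m d W1) (0\<^sub>m 0 k) (0\<^sub>m 0 d) $$ (i, j)"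
    proof (cases "j < k")
      case True
      thus ?thesis using im jm Q1 X km by (auto simp: augm_def d_def)
    next
      case False
      hence jd: "j - k < d" using jm by auto
      have "(Q1 * Z) $$ (i, j - k) = (Q1 *\<^sub>v z (j - k)) $ i"
        using im jd Q1 Z colZ[OF jd] by simp
      also have "\<dots> = W2 (j - k) $ i - W1 (j - k) $ i"
        unfolding z(2)[OF jd, symmetric] using W[of "j - k"] jd im d_def by auto
      finally show ?thesis using False im jm Q1 X Z km W1m
        by (auto simp: augm_def d_def wmat_def)
    qed
  qed (use Q1 X km in \<open>auto simp: augm_def d_def\<close>)
  have A: "augm k m Q1 W1 \<in> carrier_mat m m" unfolding augm_def by simp
  have Ec: "E \<in> carrier_mat m m" unfolding E_def using X Z km d_def by auto
  have "det (augm k m (Q1 * X) W2) = det (augm k m Q1 W1) * det E"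
    unfolding eq by (rule det_mult[OF A Ec])
  also have "det E = det X" unfolding E_def by (rule detE[OF X Z])
  finally show ?thesis by simp
qed



lemma exists_X:
  fixes Q1 Q2 :: "'r::comm_ring_1 mat"
  assumes Q1: "Q1 \<in> carrier_mat m k" and Q2: "Q2 \<in> carrier_mat m k"
    and im: "\<And>v. v \<in> carrier_vec k \<Longrightarrow> \<exists>x\<in>carrier_vec k. Q2 *\<^sub>v v = Q1 *\<^sub>v x"
  shows "\<exists>X \<in> carrier_mat k k. Q2 = Q1 * X"
proof -
  define x where "x j = (SOME x. x \<in> carrier_vec k \<and> Q2 *\<^sub>v unit_vec k j = Q1 *\<^sub>v x)" for j
  have x: "x j \<in> carrier_vec k" "Q2 *\<^sub>v unit_vec k j = Q1 *\<^sub>v x j" for j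
  proof -
    have "\<exists>y. y \<in> carrier_vec k \<and> Q2 *\<^sub>v unit_vec k j = Q1 *\<^sub>v y" using im[of "unit_vec k j"] by auto
    from someI_ex[OF this] show "x j \<in> carrier_vec k" "Q2 *\<^sub>v unit_vec k j = Q1 *\<^sub>v x j"
      unfolding x_def by auto
  qed
  define X where "X = mat k k (\<lambda>(i, j). x j $ i)"
  have colX: "col X j = x j" if "j < k" for j
    using x(1)[of j] that unfolding X_def by (intro eq_vecI) auto
  have "Q2 = Q1 * X"
  proof (intro eq_matI)
    fix i j assume i: "i < dim_row (Q1 * X)" and j: "j < dim_col (Q1 * X)"
    hence im: "i < m" and jk: "j < k" using Q1 unfolding X_def by auto
    have "(Q1 * X) $$ (i, j) = (Q1 *\<^sub>v x j) $ i" using im jk Q1 colX[OF jk] unfolding X_def by simp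
    also have "\<dots> = (Q2 *\<^sub>v unit_vec k j) $ i" using x(2)[of j] by simp
    also have "\<dots> = Q2 $$ (i, j)" using im jk Q2 by simp
    finally show "Q2 $$ (i, j) = (Q1 * X) $$ (i, j)" by simp
  qed (use Q1 Q2 in \<open>auto simp: X_def\<close>)
  moreover have "X \<in> carrier_mat k k" unfolding X_def by simp
  ultimately show ?thesis by blast
qed

lemma mat_cancel:
  fixes Q M N :: "'r::comm_ring_1 mat"
  assumes Q: "Q \<in> carrier_mat m k" and M: "M \<in> carrier_mat k l" and N: "N \<in> carrier_mat k l"
    and inj: "\<And>v. v \<in> carrier_vec k \<Longrightarrow> Q *\<^sub>v v = 0\<^sub>v m \<Longrightarrow> v = 0\<^sub>v k"
    and eq: "Q * M = Q * N"
  shows "M = N"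
proof (intro eq_matI)
  fix i j assume i: "i < dim_row N" and j: "j < dim_col N"
  have jl: "j < l" and ik: "i < k" using i j N by auto
  have "Q *\<^sub>v col M j = col (Q * M) j" using col_mult2[OF Q M jl] by simp
  also have "\<dots> = col (Q * N) j" using eq by simp
  also have "\<dots> = Q *\<^sub>v col N j" using col_mult2[OF Q N jl] by simp
  finally have e: "Q *\<^sub>v col M j = Q *\<^sub>v col N j" .
  have "Q *\<^sub>v (col M j - col N j) = Q *\<^sub>v col M j - Q *\<^sub>v col N j"
    using Q M N by (intro mult_minus_distrib_mat_vec) auto
  also have "\<dots> = 0\<^sub>v m" using e Q by (intro eq_vecI) auto
  finally have z: "Q *\<^sub>v (col M j - col N j) = 0\<^sub>v m" .
  have cc: "col M j - col N j \<in> carrier_vec k" proof (rule carrier_vecI)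
    show "dim_vec (col M j - col N j) = k" using N by simp
  qed
  have "col M j - col N j = 0\<^sub>v k" using inj[OF cc z] .
  hence "(col M j - col N j) $ i = 0" using ik by simp
  thus "M $$ (i, j) = N $$ (i, j)" using ik jl M N by simp
qed (use M N in auto)

lemma aug_mult:
  fixes S Q :: "'r::comm_ring_1 mat"
  assumes S: "S \<in> carrier_mat m m" and Q: "Q \<in> carrier_mat m k"
    and W: "\<And>j. j < m - k \<Longrightarrow> W j \<in> carrier_vec m"
  shows "S * augm k m Q W = augm k m (S * Q) (\<lambda>j. S *\<^sub>v W j)"
proof (intro eq_matI)
  fix i j assume i: "i < dim_row (augm k m (S * Q) (\<lambda>j. S *\<^sub>v W j))"
    and j: "j < dim_col (augm k m (S * Q) (\<lambda>j. S *\<^sub>v W j))"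
  hence im: "i < m" and jm: "j < m" by (auto simp: augm_def)
  show "(S * augm k m Q W) $$ (i, j) = augm k m (S * Q) (\<lambda>j. S *\<^sub>v W j) $$ (i, j)"
  proof (cases "j < k")
    case True
    have "col (augm k m Q W) j = col Q j" using True jm Q by (intro eq_vecI) (auto simp: augm_def)
    thus ?thesis using True im jm S Q by (simp add: augm_def)
  next
    case False
    have jk: "j - k < m - k" using False jm by auto
    note Wc = W[OF jk]
    have "col (augm k m Q W) j = W (j - k)" using False jm Q Wc
      by (intro eq_vecI) (auto simp: augm_def)
    thus ?thesis using False im jm S Q Wc by (simp add: augm_def)
  qed
qed (use S in \<open>auto simp: augm_def\<close>)

lemma madd_diff: "(X :: 'a::ab_group_add mat) \<in> carrier_mat nr nc \<Longrightarrow> Y \<in> carrier_mat nr nc \<Longrightarrow> X + (Y - X) = Y"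
  by (intro eq_matI) (auto dest!: carrier_matD)

lemma mneg_add: "(X :: 'a::ab_group_add mat) \<in> carrier_mat nr nc \<Longrightarrow> - X + X = 0\<^sub>m nr nc"
  by (intro eq_matI) (auto dest!: carrier_matD)

lemma mdiff_add: "(X :: 'a::ab_group_add mat) \<in> carrier_mat nr nc \<Longrightarrow> Y \<in> carrier_mat nr nc \<Longrightarrow> (Y - X) + X = Y"
  by (intro eq_matI) (auto dest!: carrier_matD)

lemma mBL: "(X :: 'a::ab_group_add mat) \<in> carrier_mat nr nc \<Longrightarrow> Y \<in> carrier_mat nr nc \<Longrightarrow> (- X - - Y) + (X - Y) = 0\<^sub>m nr nc"
  by (intro eq_matI) (auto dest!: carrier_matD)

lemma ST_inv:
  fixes A B :: "'r::comm_ring_1 mat"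
  assumes A: "A \<in> carrier_mat b b'" and B: "B \<in> carrier_mat b' b"
  shows "four_block_mat (- B) (1\<^sub>m b') (1\<^sub>m b - A * B) A * four_block_mat (- A) (1\<^sub>m b) (1\<^sub>m b' - B * A) B
    = 1\<^sub>m (b' + b)"
proof -
  have c: "- B \<in> carrier_mat b' b" "1\<^sub>m b' \<in> carrier_mat b' b'" "1\<^sub>m b - A * B \<in> carrier_mat b b"
    "A \<in> carrier_mat b b'" "- A \<in> carrier_mat b b'" "1\<^sub>m b \<in> carrier_mat b b" "1\<^sub>m b' - B * A \<in> carrier_mat b' b'"
    "B \<in> carrier_mat b' b" using A B by auto
  have AB: "A * B \<in> carrier_mat b b" and BA: "B * A \<in> carrier_mat b' b'" using A B by auto
  have TL: "- B * - A + 1\<^sub>m b' * (1\<^sub>m b' - B * A) = 1\<^sub>m b'"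
  proof -
    have "- B * - A = B * A" using A B by simp
    moreover have "1\<^sub>m b' * (1\<^sub>m b' - B * A) = 1\<^sub>m b' - B * A" using A B BA by (intro left_mult_one_mat[where nc=b']) auto
    ultimately show ?thesis using madd_diff[OF BA, of "1\<^sub>m b'"] by simp
  qed
  have TR: "- B * 1\<^sub>m b + 1\<^sub>m b' * B = 0\<^sub>m b' b"
  proof -
    have "- B * 1\<^sub>m b = - B" using B by (intro right_mult_one_mat[where nr=b']) auto
    moreover have "1\<^sub>m b' * B = B" using B by (intro left_mult_one_mat[where nc=b]) auto
    ultimately show ?thesis using mneg_add[OF B] by simp
  qed
  have BL: "(1\<^sub>m b - A * B) * - A + A * (1\<^sub>m b' - B * A) = 0\<^sub>m b b'"
  proof -
    have "(1\<^sub>m b - A * B) * - A = 1\<^sub>m b * - A - A * B * - A" using A AB by (intro minus_mult_distrib_mat) auto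
    also have "1\<^sub>m b * - A = - A" using A by (intro left_mult_one_mat[where nc=b']) auto
    also have "A * B * - A = - (A * (B * A))" using A B by simp
    finally have 1: "(1\<^sub>m b - A * B) * - A = - A - - (A * (B * A))" .
    have 2: "A * (1\<^sub>m b' - B * A) = A * 1\<^sub>m b' - A * (B * A)" using A BA by (intro mult_minus_distrib_mat) auto
    have 3: "A * 1\<^sub>m b' = A" using A by (intro right_mult_one_mat[where nr=b]) auto
    have ABA: "A * (B * A) \<in> carrier_mat b b'" using A BA by auto
    show ?thesis unfolding 1 2 3 using mBL[OF A ABA] .
  qed
  have BR: "(1\<^sub>m b - A * B) * 1\<^sub>m b + A * B = 1\<^sub>m b"
  proof -
    have "(1\<^sub>m b - A * B) * 1\<^sub>m b = 1\<^sub>m b - A * B" using A B AB by (intro right_mult_one_mat[where nr=b]) auto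
    thus ?thesis using mdiff_add[OF AB, of "1\<^sub>m b"] by simp
  qed
  show ?thesis
    by (subst mult_four_block_mat[OF c]) (simp only: TL TR BL BR four_block_one_mat)
qed



definition pres :: "('r::comm_ring_1 vec \<Rightarrow> 'm::ab_group_add) \<Rightarrow> 'r mat \<Rightarrow> nat \<Rightarrow> nat \<Rightarrow> bool" where
  "pres \<pi> P a b \<longleftrightarrow> P \<in> carrier_mat b a \<and>
     (\<forall>v \<in> carrier_vec a. P *\<^sub>v v = 0\<^sub>v b \<longrightarrow> v = 0\<^sub>v a) \<and>
     (\<forall>v \<in> carrier_vec b. \<forall>w \<in> carrier_vec b. \<pi> (v + w) = \<pi> v + \<pi> w) \<and>
     {v \<in> carrier_vec b. \<pi> v = 0} = (\<lambda>x. P *\<^sub>v x) ` carrier_vec a"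

lemma inj_pres_pres: "injective_presentation sN P a b \<pi> \<Longrightarrow> pres \<pi> P a b"
  unfolding injective_presentation_def pres_def by blast

lemma vec_last_append': "y \<in> carrier_vec n \<Longrightarrow> vec_last (x @\<^sub>v y) n = y"
  by (intro eq_vecI) (auto simp: vec_last_def)

lemma zero_append: "0\<^sub>v (c + b) = (0\<^sub>v c @\<^sub>v 0\<^sub>v b :: 'a::zero vec)"
  by (intro eq_vecI) auto

lemma vec_last_add: "v \<in> carrier_vec (c + b) \<Longrightarrow> w \<in> carrier_vec (c + b) \<Longrightarrow>
   vec_last (v + w) b = vec_last v b + vec_last (w :: 'a::plus vec) b"
  by (intro eq_vecI) (auto simp: vec_last_def)

lemma stab_mult:
  fixes P :: "'r::comm_ring_1 mat"
  assumes P: "P \<in> carrier_mat b a" and x: "x \<in> carrier_vec c" and y: "y \<in> carrier_vec a"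
  shows "four_block_mat (1\<^sub>m c) (0\<^sub>m c a) (0\<^sub>m b c) P *\<^sub>v (x @\<^sub>v y) = x @\<^sub>v (P *\<^sub>v y)"
proof -
  have "four_block_mat (1\<^sub>m c) (0\<^sub>m c a) (0\<^sub>m b c) P *\<^sub>v (x @\<^sub>v y) =
     (1\<^sub>m c *\<^sub>v x + 0\<^sub>m c a *\<^sub>v y) @\<^sub>v (0\<^sub>m b c *\<^sub>v x + P *\<^sub>v y)"
    by (rule four_block_mat_mult_vec) (use P x y in auto)
  also have "1\<^sub>m c *\<^sub>v x + 0\<^sub>m c a *\<^sub>v y = x" using x y by (intro eq_vecI) auto
  also have "0\<^sub>m b c *\<^sub>v x + P *\<^sub>v y = P *\<^sub>v y" using x y P by (intro eq_vecI) auto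
  finally show ?thesis .
qed

lemma stab:
  fixes P :: "'r::comm_ring_1 mat" and \<pi> :: "'r vec \<Rightarrow> 'm::ab_group_add"
  assumes pr: "pres \<pi> P a b"
  shows "pres (\<lambda>v. \<pi> (vec_last v b)) (four_block_mat (1\<^sub>m c) (0\<^sub>m c a) (0\<^sub>m b c) P) (c + a) (c + b)"
proof -
  let ?Q = "four_block_mat (1\<^sub>m c) (0\<^sub>m c a) (0\<^sub>m b c) P"
  have P: "P \<in> carrier_mat b a" and inj: "\<And>v. v \<in> carrier_vec a \<Longrightarrow> P *\<^sub>v v = 0\<^sub>v b \<Longrightarrow> v = 0\<^sub>v a"
    and add: "\<And>v w. v \<in> carrier_vec b \<Longrightarrow> w \<in> carrier_vec b \<Longrightarrow> \<pi> (v + w) = \<pi> v + \<pi> w"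
    and ker: "{v \<in> carrier_vec b. \<pi> v = 0} = (\<lambda>x. P *\<^sub>v x) ` carrier_vec a"
    using pr unfolding pres_def by auto
  have Qc: "?Q \<in> carrier_mat (c + b) (c + a)" using P by auto
  have dec: "v = vec_first v n @\<^sub>v vec_last v m" if "v \<in> carrier_vec (n + m)" for v :: "'r vec" and n m
    using that by simp
  have i1: "\<forall>v \<in> carrier_vec (c + a). ?Q *\<^sub>v v = 0\<^sub>v (c + b) \<longrightarrow> v = 0\<^sub>v (c + a)"
  proof (intro ballI impI)
    fix v :: "'r vec" assume v: "v \<in> carrier_vec (c + a)" and z: "?Q *\<^sub>v v = 0\<^sub>v (c + b)"
    have "?Q *\<^sub>v v = vec_first v c @\<^sub>v (P *\<^sub>v vec_last v a)"
      using stab_mult[OF P vec_first_carrier vec_last_carrier] dec[OF v] by metis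
    hence "vec_first v c @\<^sub>v (P *\<^sub>v vec_last v a) = 0\<^sub>v c @\<^sub>v 0\<^sub>v b" using z zero_append by metis
    hence "vec_first v c = 0\<^sub>v c" "P *\<^sub>v vec_last v a = 0\<^sub>v b" using append_vec_eq[of "vec_first v c" c "0\<^sub>v c"] by auto
    hence "vec_first v c = 0\<^sub>v c" "vec_last v a = 0\<^sub>v a" using inj by auto
    thus "v = 0\<^sub>v (c + a)" using dec[OF v] zero_append by metis
  qed
  have i2: "\<forall>v \<in> carrier_vec (c + b). \<forall>w \<in> carrier_vec (c + b).
      \<pi> (vec_last (v + w) b) = \<pi> (vec_last v b) + \<pi> (vec_last w b)"
    using add vec_last_add by (metis vec_last_carrier)
  have i3: "{v \<in> carrier_vec (c + b). \<pi> (vec_last v b) = 0} = (\<lambda>x. ?Q *\<^sub>v x) ` carrier_vec (c + a)"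
  proof (intro equalityI subsetI)
    fix v assume "v \<in> {v \<in> carrier_vec (c + b). \<pi> (vec_last v b) = 0}"
    hence v: "v \<in> carrier_vec (c + b)" and pv: "\<pi> (vec_last v b) = 0" by auto
    have "vec_last v b \<in> {v \<in> carrier_vec b. \<pi> v = 0}" using pv by simp
    then obtain y where y: "y \<in> carrier_vec a" "vec_last v b = P *\<^sub>v y" using ker by auto
    have "v = vec_first v c @\<^sub>v (P *\<^sub>v y)" using dec[OF v] y by metis
    also have "\<dots> = ?Q *\<^sub>v (vec_first v c @\<^sub>v y)" using stab_mult[OF P vec_first_carrier y(1)] by simp
    finally show "v \<in> (\<lambda>x. ?Q *\<^sub>v x) ` carrier_vec (c + a)" using y(1) by force
  next
    fix v assume "v \<in> (\<lambda>x. ?Q *\<^sub>v x) ` carrier_vec (c + a)"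
    then obtain x where x: "x \<in> carrier_vec (c + a)" "v = ?Q *\<^sub>v x" by auto
    have "v = vec_first x c @\<^sub>v (P *\<^sub>v vec_last x a)"
      using x stab_mult[OF P vec_first_carrier vec_last_carrier] dec[OF x(1)] by metis
    moreover have "P *\<^sub>v vec_last x a \<in> {v \<in> carrier_vec b. \<pi> v = 0}" using ker by auto
    ultimately show "v \<in> {v \<in> carrier_vec (c + b). \<pi> (vec_last v b) = 0}"
      using P by (auto simp: vec_last_append')
  qed
  show ?thesis unfolding pres_def using Qc i1 i2 i3 by blast
qed

lemma stab_aug:
  fixes P :: "'r::comm_ring_1 mat"
  assumes P: "P \<in> carrier_mat b a" and ab: "a \<le> b" and U: "\<And>j. j < b - a \<Longrightarrow> U j \<in> carrier_vec b"
  shows "det (augm (c + a) (c + b) (four_block_mat (1\<^sub>m c) (0\<^sub>m c a) (0\<^sub>m b c) P) (\<lambda>j. 0\<^sub>v c @\<^sub>v U j))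
     = det (augm a b P U)"
proof -
  have "augm (c + a) (c + b) (four_block_mat (1\<^sub>m c) (0\<^sub>m c a) (0\<^sub>m b c) P) (\<lambda>j. 0\<^sub>v c @\<^sub>v U j)
     = four_block_mat (1\<^sub>m c) (0\<^sub>m c b) (0\<^sub>m b c) (augm a b P U)"
  proof (intro eq_matI)
    fix i j assume i: "i < dim_row (four_block_mat (1\<^sub>m c) (0\<^sub>m c b) (0\<^sub>m b c) (augm a b P U))"
      and j: "j < dim_col (four_block_mat (1\<^sub>m c) (0\<^sub>m c b) (0\<^sub>m b c) (augm a b P U))"
    hence i': "i < c + b" and j': "j < c + b" by (auto simp: augm_def)
    show "augm (c + a) (c + b) (four_block_mat (1\<^sub>m c) (0\<^sub>m c a) (0\<^sub>m b c) P) (\<lambda>j. 0\<^sub>v c @\<^sub>v U j) $$ (i, j) =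
         four_block_mat (1\<^sub>m c) (0\<^sub>m c b) (0\<^sub>m b c) (augm a b P U) $$ (i, j)"
    proof (cases "j < c + a")
      case True
      thus ?thesis using i' j' P by (auto simp: augm_def)
    next
      case False
      hence jj: "j - (c + a) < b - a" "j - c - a = j - (c + a)" using j' by auto
      note Uc = U[OF jj(1)]
      show ?thesis using False i' j' P Uc jj by (auto simp: augm_def)
    qed
  qed (auto simp: augm_def)
  also have "det \<dots> = det (augm a b P U)" by (rule BD2) (simp add: augm_def)
  finally show ?thesis .
qed


lemma mult_mat_vec_smult:
  fixes A :: "'r::comm_ring_1 mat"
  assumes A: "A \<in> carrier_mat nr nc" and v: "v \<in> carrier_vec nc"
  shows "A *\<^sub>v (r \<cdot>\<^sub>v v) = r \<cdot>\<^sub>v (A *\<^sub>v v)"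
  using A v by (intro eq_vecI) (auto simp: scalar_prod_smult_right)

lemma lift_mat:
  fixes \<pi> \<pi>' :: "'r::comm_ring_1 vec \<Rightarrow> 'm::ab_group_add" and sN :: "'r \<Rightarrow> 'm \<Rightarrow> 'm"
  assumes addA: "\<forall>v\<in>carrier_vec b. \<forall>w\<in>carrier_vec b. \<pi> (v + w) = \<pi> v + \<pi> w"
    and smulA: "\<forall>r. \<forall>v\<in>carrier_vec b. \<pi> (r \<cdot>\<^sub>v v) = sN r (\<pi> v)"
    and surj: "\<pi> ` carrier_vec b = UNIV"
    and addB: "\<forall>v\<in>carrier_vec b'. \<forall>w\<in>carrier_vec b'. \<pi>' (v + w) = \<pi>' v + \<pi>' w"
    and smulB: "\<forall>r. \<forall>v\<in>carrier_vec b'. \<pi>' (r \<cdot>\<^sub>v v) = sN r (\<pi>' v)"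
  shows "\<exists>A \<in> carrier_mat b b'. \<forall>y\<in>carrier_vec b'. \<pi> (A *\<^sub>v y) = \<pi>' y"
proof -
  define a where "a k = (SOME v. v \<in> carrier_vec b \<and> \<pi> v = \<pi>' (unit_vec b' k))" for k
  have a: "a k \<in> carrier_vec b" "\<pi> (a k) = \<pi>' (unit_vec b' k)" for k
  proof -
    have "\<pi>' (unit_vec b' k) \<in> \<pi> ` carrier_vec b" using surj by simp
    hence "\<exists>v. v \<in> carrier_vec b \<and> \<pi> v = \<pi>' (unit_vec b' k)" by auto
    from someI_ex[OF this] show "a k \<in> carrier_vec b" "\<pi> (a k) = \<pi>' (unit_vec b' k)"
      unfolding a_def by auto
  qed
  define A where "A = mat b b' (\<lambda>(i, k). a k $ i)"
  have Ac: "A \<in> carrier_mat b b'" unfolding A_def by simp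
  have colA: "A *\<^sub>v unit_vec b' k = a k" if "k < b'" for k
    using a(1)[of k] that unfolding A_def by (intro eq_vecI) auto
  have z0: "\<pi> (0\<^sub>v b) = 0"
  proof -
    have "\<pi> (0\<^sub>v b + 0\<^sub>v b) = \<pi> (0\<^sub>v b) + \<pi> (0\<^sub>v b)" using addA zero_carrier_vec by blast
    thus ?thesis by simp
  qed
  have z0': "\<pi>' (0\<^sub>v b') = 0"
  proof -
    have "\<pi>' (0\<^sub>v b' + 0\<^sub>v b') = \<pi>' (0\<^sub>v b') + \<pi>' (0\<^sub>v b')" using addB zero_carrier_vec by blast
    thus ?thesis by simp
  qed
  define tr where "tr n y = vec b' (\<lambda>i. if i < n then y $ i else 0)" for n and y :: "'r vec"
  have trc: "tr n y \<in> carrier_vec b'" for n y unfolding tr_def by simp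
  have main: "\<pi> (A *\<^sub>v tr n y) = \<pi>' (tr n y)" if y: "y \<in> carrier_vec b'" for n y
  proof (induction n)
    case 0
    have "tr 0 y = 0\<^sub>v b'" unfolding tr_def by (intro eq_vecI) auto
    moreover have "A *\<^sub>v 0\<^sub>v b' = 0\<^sub>v b" using Ac by (intro eq_vecI) auto
    ultimately show ?case using z0 z0' by simp
  next
    case (Suc n)
    show ?case
    proof (cases "n < b'")
      case True
      have e: "tr (Suc n) y = tr n y + (y $ n) \<cdot>\<^sub>v unit_vec b' n"
        unfolding tr_def using True y by (intro eq_vecI) (auto simp: less_Suc_eq)
      have "A *\<^sub>v tr (Suc n) y = A *\<^sub>v tr n y + A *\<^sub>v ((y $ n) \<cdot>\<^sub>v unit_vec b' n)"
        unfolding e using Ac trc by (intro mult_add_distrib_mat_vec) auto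
      also have "A *\<^sub>v ((y $ n) \<cdot>\<^sub>v unit_vec b' n) = (y $ n) \<cdot>\<^sub>v a n"
        using mult_mat_vec_smult[OF Ac, of "unit_vec b' n"] colA[OF True] by simp
      finally have "\<pi> (A *\<^sub>v tr (Suc n) y) = \<pi> (A *\<^sub>v tr n y) + \<pi> ((y $ n) \<cdot>\<^sub>v a n)"
      proof -
        have c1: "A *\<^sub>v tr n y \<in> carrier_vec b" using Ac trc by auto
        have c2: "(y $ n) \<cdot>\<^sub>v a n \<in> carrier_vec b" using a(1)[of n] by auto
        show "A *\<^sub>v tr (Suc n) y = A *\<^sub>v tr n y + (y $ n) \<cdot>\<^sub>v a n \<Longrightarrow> \<pi> (A *\<^sub>v tr (Suc n) y) = \<pi> (A *\<^sub>v tr n y) + \<pi> ((y $ n) \<cdot>\<^sub>v a n)"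
          using addA[rule_format, OF c1 c2] by simp
      qed
      also have "\<dots> = \<pi>' (tr n y) + sN (y $ n) (\<pi>' (unit_vec b' n))"
        using Suc smulA a[of n] by simp
      also have "\<dots> = \<pi>' (tr n y) + \<pi>' ((y $ n) \<cdot>\<^sub>v unit_vec b' n)"
        using smulB by simp
      also have "\<dots> = \<pi>' (tr (Suc n) y)" unfolding e using addB trc by simp
      finally show ?thesis .
    next
      case False
      have "tr (Suc n) y = tr n y" unfolding tr_def using False by (intro eq_vecI) auto
      thus ?thesis using Suc by simp
    qed
  qed
  have "\<forall>y\<in>carrier_vec b'. \<pi> (A *\<^sub>v y) = \<pi>' y"
  proof
    fix y :: "'r vec" assume y: "y \<in> carrier_vec b'"
    have "tr b' y = y" unfolding tr_def using y by (intro eq_vecI) auto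
    thus "\<pi> (A *\<^sub>v y) = \<pi>' y" using main[OF y, of b'] by simp
  qed
  thus ?thesis using Ac by blast
qed



lemma pres_parts:
  assumes "pres \<pi> P a b"
  shows "P \<in> carrier_mat b a" "\<And>v. v \<in> carrier_vec a \<Longrightarrow> P *\<^sub>v v = 0\<^sub>v b \<Longrightarrow> v = 0\<^sub>v a"
    "\<And>v w. v \<in> carrier_vec b \<Longrightarrow> w \<in> carrier_vec b \<Longrightarrow> \<pi> (v + w) = \<pi> v + \<pi> w"
    "\<And>v. v \<in> carrier_vec b \<Longrightarrow> \<pi> v = 0 \<Longrightarrow> \<exists>x\<in>carrier_vec a. v = P *\<^sub>v x"
    "\<And>x. x \<in> carrier_vec a \<Longrightarrow> \<pi> (P *\<^sub>v x) = 0"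
proof -
  note * = assms[unfolded pres_def]
  show "P \<in> carrier_mat b a" using * by blast
  show "\<And>v. v \<in> carrier_vec a \<Longrightarrow> P *\<^sub>v v = 0\<^sub>v b \<Longrightarrow> v = 0\<^sub>v a" using * by blast
  show "\<And>v w. v \<in> carrier_vec b \<Longrightarrow> w \<in> carrier_vec b \<Longrightarrow> \<pi> (v + w) = \<pi> v + \<pi> w" using * by blast
  show "\<And>v. v \<in> carrier_vec b \<Longrightarrow> \<pi> v = 0 \<Longrightarrow> \<exists>x\<in>carrier_vec a. v = P *\<^sub>v x"
  proof -
    fix v assume "v \<in> carrier_vec b" "\<pi> v = 0"
    hence "v \<in> {v \<in> carrier_vec b. \<pi> v = 0}" by simp
    thus "\<exists>x\<in>carrier_vec a. v = P *\<^sub>v x" using * by auto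
  qed
  show "\<And>x. x \<in> carrier_vec a \<Longrightarrow> \<pi> (P *\<^sub>v x) = 0"
  proof -
    fix x :: "'a vec" assume "x \<in> carrier_vec a"
    hence "P *\<^sub>v x \<in> {v \<in> carrier_vec b. \<pi> v = 0}" using * by blast
    thus "\<pi> (P *\<^sub>v x) = 0" by simp
  qed
qed

lemma welldef:
  assumes pr: "pres \<pi> P a b" and bd: "b = a + d"
    and U: "is_lift \<pi> b d u U" and V: "is_lift \<pi> b d u V"
  shows "det_augmented P a b U = det_augmented P a b V"
proof -
  note pp = pres_parts[OF pr]
  have "det (augm a b (P * 1\<^sub>m a) V) = det (1\<^sub>m a) * det (augm a b P U)"
  proof (rule core[OF pp(1) one_carrier_mat])
    show "a \<le> b" using bd by simp
    show "\<And>v. v \<in> carrier_vec b \<Longrightarrow> \<pi> v = 0 \<Longrightarrow> \<exists>x\<in>carrier_vec a. v = P *\<^sub>v x" by (rule pp(4))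
    show "\<And>v w. v \<in> carrier_vec b \<Longrightarrow> w \<in> carrier_vec b \<Longrightarrow> \<pi> (v + w) = \<pi> v + \<pi> w" by (rule pp(3))
    show "\<And>j. j < b - a \<Longrightarrow> U j \<in> carrier_vec b \<and> V j \<in> carrier_vec b \<and> \<pi> (U j) = \<pi> (V j)"
      using U V bd unfolding is_lift_def by auto
  qed
  moreover have "P * 1\<^sub>m a = P" using pp(1) by (rule right_mult_one_mat)
  ultimately show ?thesis unfolding det_augmented_augm by simp
qed

lemma lift_ex:
  assumes "\<pi> ` carrier_vec b = UNIV"
  shows "\<exists>U. is_lift \<pi> b d u U"
proof -
  have "\<exists>v. v \<in> carrier_vec b \<and> \<pi> v = u j" for j
  proof -
    have "u j \<in> \<pi> ` carrier_vec b" using assms by simp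
    thus ?thesis by auto
  qed
  hence "\<forall>j. \<exists>v. v \<in> carrier_vec b \<and> \<pi> v = u j" by blast
  then obtain U where "\<forall>j. U j \<in> carrier_vec b \<and> \<pi> (U j) = u j" by metis
  thus ?thesis unfolding is_lift_def by blast
qed

lemma pi_diff:
  assumes add: "\<And>v w. v \<in> carrier_vec b \<Longrightarrow> w \<in> carrier_vec b \<Longrightarrow> \<pi> (v + w) = \<pi> v + (\<pi> w :: 'm::ab_group_add)"
    and x: "x \<in> carrier_vec b" and z: "z \<in> carrier_vec b"
  shows "\<pi> (x - z) = \<pi> x - \<pi> (z :: 'r::ab_group_add vec)"
proof -
  have "(x - z) + z = x" using x z by (intro eq_vecI) auto
  hence "\<pi> x = \<pi> (x - z) + \<pi> z" using add[of "x - z" z] x z by auto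
  thus ?thesis by (simp add: algebra_simps)
qed


lemma S_compat:
  fixes A B :: "'r::comm_ring_1 mat" and \<pi> \<pi>' :: "'r vec \<Rightarrow> 'm::ab_group_add"
  assumes A: "A \<in> carrier_mat b b'" and B: "B \<in> carrier_mat b' b"
    and hA: "\<And>y. y \<in> carrier_vec b' \<Longrightarrow> \<pi> (A *\<^sub>v y) = \<pi>' y"
    and hB: "\<And>x. x \<in> carrier_vec b \<Longrightarrow> \<pi>' (B *\<^sub>v x) = \<pi> x"
    and add: "\<And>v w. v \<in> carrier_vec b \<Longrightarrow> w \<in> carrier_vec b \<Longrightarrow> \<pi> (v + w) = \<pi> v + \<pi> w"
    and w: "w \<in> carrier_vec (b + b')"
  shows "\<pi> (vec_last (four_block_mat (- B) (1\<^sub>m b') (1\<^sub>m b - A * B) A *\<^sub>v w) b) = \<pi>' (vec_last w b')"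
proof -
  define x where "x = vec_first w b"
  define y where "y = vec_last w b'"
  have x: "x \<in> carrier_vec b" and y: "y \<in> carrier_vec b'" unfolding x_def y_def by auto
  have wxy: "w = x @\<^sub>v y" unfolding x_def y_def using w by simp
  have "four_block_mat (- B) (1\<^sub>m b') (1\<^sub>m b - A * B) A *\<^sub>v (x @\<^sub>v y)
     = (- B *\<^sub>v x + 1\<^sub>m b' *\<^sub>v y) @\<^sub>v ((1\<^sub>m b - A * B) *\<^sub>v x + A *\<^sub>v y)"
    by (rule four_block_mat_mult_vec) (use A B x y in auto)
  hence "vec_last (four_block_mat (- B) (1\<^sub>m b') (1\<^sub>m b - A * B) A *\<^sub>v w) b = vec_last ((- B *\<^sub>v x + 1\<^sub>m b' *\<^sub>v y) @\<^sub>v ((1\<^sub>m b - A * B) *\<^sub>v x + A *\<^sub>v y)) b"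
    unfolding wxy by simp
  also have "\<dots> = (1\<^sub>m b - A * B) *\<^sub>v x + A *\<^sub>v y"
    by (rule vec_last_append') (use A in \<open>intro carrier_vecI, auto dest!: carrier_matD\<close>)
  also have "(1\<^sub>m b - A * B) *\<^sub>v x = x - A *\<^sub>v (B *\<^sub>v x)"
  proof -
    have "(1\<^sub>m b - A * B) *\<^sub>v x = 1\<^sub>m b *\<^sub>v x - (A * B) *\<^sub>v x"
      using A B x by (intro minus_mult_distrib_mat_vec) auto
    thus ?thesis using A B x by simp
  qed
  finally have e: "vec_last (four_block_mat (- B) (1\<^sub>m b') (1\<^sub>m b - A * B) A *\<^sub>v w) b = x - A *\<^sub>v (B *\<^sub>v x) + A *\<^sub>v y" .
  have c1: "A *\<^sub>v (B *\<^sub>v x) \<in> carrier_vec b" using A B x by auto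
  have c2: "A *\<^sub>v y \<in> carrier_vec b" using A y by auto
  have c3: "x - A *\<^sub>v (B *\<^sub>v x) \<in> carrier_vec b" using x c1 by auto
  have "\<pi> (x - A *\<^sub>v (B *\<^sub>v x) + A *\<^sub>v y) = \<pi> (x - A *\<^sub>v (B *\<^sub>v x)) + \<pi> (A *\<^sub>v y)"
    using add[OF c3 c2] .
  also have "\<pi> (x - A *\<^sub>v (B *\<^sub>v x)) = \<pi> x - \<pi> (A *\<^sub>v (B *\<^sub>v x))" by (rule pi_diff[OF add x c1])
  also have "\<pi> (A *\<^sub>v (B *\<^sub>v x)) = \<pi> x" using hA[of "B *\<^sub>v x"] hB[OF x] B x by auto
  also have "\<pi> (A *\<^sub>v y) = \<pi>' y" using hA[OF y] .
  finally show ?thesis unfolding e y_def by simp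
qed

lemma main3:
  fixes P P' A B :: "'r::comm_ring_1 mat" and \<pi> \<pi>' :: "'r vec \<Rightarrow> 'm::ab_group_add"
  assumes pr: "pres \<pi> P a b" and pr': "pres \<pi>' P' a' b'"
    and bd: "b = a + d" and bd': "b' = a' + d"
    and A: "A \<in> carrier_mat b b'" and B: "B \<in> carrier_mat b' b"
    and hA: "\<And>y. y \<in> carrier_vec b' \<Longrightarrow> \<pi> (A *\<^sub>v y) = \<pi>' y"
    and hB: "\<And>x. x \<in> carrier_vec b \<Longrightarrow> \<pi>' (B *\<^sub>v x) = \<pi> x"
  shows "\<exists>c e. c * e = 1 \<and> (\<forall>u U U'. is_lift \<pi> b d u U \<longrightarrow> is_lift \<pi>' b' d u U' \<longrightarrow>
            det_augmented P' a' b' U' = c * det_augmented P a b U)"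
proof -
  note pp = pres_parts[OF pr]
  note pp' = pres_parts[OF pr']
  define m where "m = b' + b"
  define k where "k = b' + a"
  have mm: "b + b' = m" unfolding m_def by simp
  have kk: "b + a' = k" unfolding k_def using bd bd' by simp
  have km: "k \<le> m" unfolding k_def m_def using bd by simp
  have dm: "m - k = d" unfolding k_def m_def using bd by simp
  define Q1 where "Q1 = four_block_mat (1\<^sub>m b') (0\<^sub>m b' a) (0\<^sub>m b b') P"
  define Q2' where "Q2' = four_block_mat (1\<^sub>m b) (0\<^sub>m b a') (0\<^sub>m b' b) P'"
  define \<rho>1 where "\<rho>1 v = \<pi> (vec_last v b)" for v
  define \<rho>2 where "\<rho>2 v = \<pi>' (vec_last v b')" for v
  have s1: "pres \<rho>1 Q1 k m" using stab[OF pr, of b'] unfolding Q1_def \<rho>1_def k_def m_def .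
  have s2: "pres \<rho>2 Q2' k m" using stab[OF pr', of b] unfolding Q2'_def \<rho>2_def kk mm .
  note q1 = pres_parts[OF s1]
  note q2 = pres_parts[OF s2]
  define S where "S = four_block_mat (- B) (1\<^sub>m b') (1\<^sub>m b - A * B) A"
  define T where "T = four_block_mat (- A) (1\<^sub>m b) (1\<^sub>m b' - B * A) B"
  have "S \<in> carrier_mat (b' + b) (b + b')" unfolding S_def
    using four_block_carrier_mat[of "- B" b' b A b b'] A B by auto
  hence Sc: "S \<in> carrier_mat m m" using mm m_def by simp
  have "T \<in> carrier_mat (b + b') (b' + b)" unfolding T_def
    using four_block_carrier_mat[of "- A" b b' B b' b] A B by auto
  hence Tc: "T \<in> carrier_mat m m" using mm m_def by simp
  have ST: "S * T = 1\<^sub>m m" unfolding S_def T_def m_def by (rule ST_inv[OF A B])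
  have "T * S = 1\<^sub>m (b + b')" unfolding S_def T_def by (rule ST_inv[OF B A])
  hence TS: "T * S = 1\<^sub>m m" using mm by simp
  have STv: "S *\<^sub>v (T *\<^sub>v z) = z" if z: "z \<in> carrier_vec m" for z
  proof -
    have "(S * T) *\<^sub>v z = S *\<^sub>v (T *\<^sub>v z)" by (rule assoc_mult_mat_vec[OF Sc Tc z])
    thus ?thesis using ST z by simp
  qed
  have compat: "\<rho>1 (S *\<^sub>v w) = \<rho>2 w" if w: "w \<in> carrier_vec m" for w
    unfolding \<rho>1_def \<rho>2_def S_def by (rule S_compat[OF A B hA hB pp(3)]) (use w mm in auto)
  define Q2 where "Q2 = S * Q2'"
  have Q2c: "Q2 \<in> carrier_mat m k" unfolding Q2_def using Sc q2(1) by auto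
  have Q2im: "\<exists>x\<in>carrier_vec k. Q2 *\<^sub>v v = Q1 *\<^sub>v x" if v: "v \<in> carrier_vec k" for v
  proof -
    have c: "Q2' *\<^sub>v v \<in> carrier_vec m" using q2(1) v by auto
    have "\<rho>1 (Q2 *\<^sub>v v) = \<rho>2 (Q2' *\<^sub>v v)" unfolding Q2_def using compat[OF c] Sc q2(1) v by simp
    also have "\<dots> = 0" by (rule q2(5)[OF v])
    finally show ?thesis using q1(4)[of "Q2 *\<^sub>v v"] Q2c v by auto
  qed
  have Q1im: "\<exists>x\<in>carrier_vec k. Q1 *\<^sub>v v = Q2 *\<^sub>v x" if v: "v \<in> carrier_vec k" for v
  proof -
    have c: "Q1 *\<^sub>v v \<in> carrier_vec m" using q1(1) v by auto
    have c': "T *\<^sub>v (Q1 *\<^sub>v v) \<in> carrier_vec m" using Tc c by auto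
    have "\<rho>2 (T *\<^sub>v (Q1 *\<^sub>v v)) = \<rho>1 (S *\<^sub>v (T *\<^sub>v (Q1 *\<^sub>v v)))" using compat[OF c'] by simp
    also have "S *\<^sub>v (T *\<^sub>v (Q1 *\<^sub>v v)) = Q1 *\<^sub>v v" by (rule STv[OF c])
    also have "\<rho>1 (Q1 *\<^sub>v v) = 0" by (rule q1(5)[OF v])
    finally obtain x where x: "x \<in> carrier_vec k" "T *\<^sub>v (Q1 *\<^sub>v v) = Q2' *\<^sub>v x" using q2(4)[OF c'] by auto
    have "Q1 *\<^sub>v v = S *\<^sub>v (T *\<^sub>v (Q1 *\<^sub>v v))" using STv[OF c] by simp
    also have "\<dots> = Q2 *\<^sub>v x" unfolding x(2) Q2_def using Sc q2(1) x(1) by simp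
    finally show ?thesis using x(1) by blast
  qed
  obtain X where X: "X \<in> carrier_mat k k" "Q2 = Q1 * X" using exists_X[OF q1(1) Q2c Q2im] by blast
  obtain Y where Y: "Y \<in> carrier_mat k k" "Q1 = Q2 * Y" using exists_X[OF Q2c q1(1) Q1im] by blast
  have "Q1 * (X * Y) = Q1 * 1\<^sub>m k"
  proof -
    have "Q1 * (X * Y) = (Q1 * X) * Y" using assoc_mult_mat[OF q1(1) X(1) Y(1)] by simp
    also have "\<dots> = Q2 * Y" by (simp only: X(2))
    also have "\<dots> = Q1" by (rule Y(2)[symmetric])
    also have "\<dots> = Q1 * 1\<^sub>m k" using q1(1) by simp
    finally show ?thesis .
  qed
  moreover have XYc: "X * Y \<in> carrier_mat k k" using X(1) Y(1) by auto
  ultimately have XY: "X * Y = 1\<^sub>m k" using mat_cancel[OF q1(1) XYc one_carrier_mat q1(2)] by blast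
  have dXY: "det X * det Y = 1" using det_mult[OF X(1) Y(1)] XY by simp
  have dST: "det S * det T = 1" using det_mult[OF Sc Tc] ST by simp
  show ?thesis
  proof (intro exI conjI allI impI)
    show "(det T * det X) * (det S * det Y) = 1" using dXY dST by (simp add: ac_simps)
    fix u U U' assume U: "is_lift \<pi> b d u U" and U': "is_lift \<pi>' b' d u U'"
    have Uc: "\<And>j. j < b - a \<Longrightarrow> U j \<in> carrier_vec b" using U bd unfolding is_lift_def by auto
    have U'c: "\<And>j. j < b' - a' \<Longrightarrow> U' j \<in> carrier_vec b'" using U' bd' unfolding is_lift_def by auto
    define W1 where "W1 j = 0\<^sub>v b' @\<^sub>v U j" for j
    define W2' where "W2' j = 0\<^sub>v b @\<^sub>v U' j" for j
    have W1c: "W1 j \<in> carrier_vec m" if "j < m - k" for j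
      using Uc[of j] that dm bd unfolding W1_def m_def by auto
    have W2'c: "W2' j \<in> carrier_vec m" if j: "j < m - k" for j
    proof -
      have "U' j \<in> carrier_vec b'" using U'c[of j] j dm bd' by auto
      hence "W2' j \<in> carrier_vec (b + b')" unfolding W2'_def by auto
      thus ?thesis using mm by simp
    qed
    have e1: "det (augm k m Q1 W1) = det_augmented P a b U"
      unfolding det_augmented_augm Q1_def k_def m_def W1_def
      by (rule stab_aug[OF pp(1)]) (use bd Uc in auto)
    have e2: "det (augm k m Q2' W2') = det_augmented P' a' b' U'"
      unfolding det_augmented_augm Q2'_def kk[symmetric] mm[symmetric] W2'_def
      by (rule stab_aug[OF pp'(1)]) (use bd' U'c in auto)
    have e3: "S * augm k m Q2' W2' = augm k m Q2 (\<lambda>j. S *\<^sub>v W2' j)"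
      unfolding Q2_def by (rule aug_mult[OF Sc q2(1) W2'c])
    have "det S * det (augm k m Q2' W2') = det (augm k m Q2 (\<lambda>j. S *\<^sub>v W2' j))"
      unfolding e3[symmetric] by (rule det_mult[OF Sc, symmetric]) (simp add: augm_def)
    also have "\<dots> = det X * det (augm k m Q1 W1)"
      unfolding X(2)
    proof (rule core[OF q1(1) X(1) km])
      show "\<And>v. v \<in> carrier_vec m \<Longrightarrow> \<rho>1 v = 0 \<Longrightarrow> \<exists>x\<in>carrier_vec k. v = Q1 *\<^sub>v x" by (rule q1(4))
      show "\<And>v w. v \<in> carrier_vec m \<Longrightarrow> w \<in> carrier_vec m \<Longrightarrow> \<rho>1 (v + w) = \<rho>1 v + \<rho>1 w" by (rule q1(3))
      fix j assume j: "j < m - k"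
      have "\<rho>1 (W1 j) = \<pi> (U j)" unfolding \<rho>1_def W1_def using Uc[of j] j dm bd by (simp add: vec_last_append')
      also have "\<dots> = u j" using U j dm unfolding is_lift_def by auto
      also have "\<dots> = \<pi>' (U' j)" using U' j dm unfolding is_lift_def by auto
      also have "\<dots> = \<rho>2 (W2' j)" unfolding \<rho>2_def W2'_def using U'c[of j] j dm bd' by (simp add: vec_last_append')
      also have "\<dots> = \<rho>1 (S *\<^sub>v W2' j)" using compat[OF W2'c[OF j]] by simp
      finally show "W1 j \<in> carrier_vec m \<and> S *\<^sub>v W2' j \<in> carrier_vec m \<and> \<rho>1 (W1 j) = \<rho>1 (S *\<^sub>v W2' j)"
        using W1c[OF j] W2'c[OF j] Sc by auto
    qed
    finally have "det S * det_augmented P' a' b' U' = det X * det_augmented P a b U" unfolding e1 e2 .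
    hence h: "det T * (det S * det_augmented P' a' b' U') = det T * (det X * det_augmented P a b U)" by simp
    have "det_augmented P' a' b' U' = (det S * det T) * det_augmented P' a' b' U'" using dST by simp
    also have "\<dots> = det T * (det S * det_augmented P' a' b' U')" by (simp add: ac_simps)
    also have "\<dots> = det T * (det X * det_augmented P a b U)" by (rule h)
    finally show "det_augmented P' a' b' U' = det T * det X * det_augmented P a b U"
      by (simp add: ac_simps)
  qed
qed



theorem proposition10p3:
  fixes sN :: "'n::finite grpring \<Rightarrow> 'm::ab_group_add \<Rightarrow> 'm"
    and P P' :: "'n grpring mat"
    and \<pi> \<pi>' :: "'n grpring vec \<Rightarrow> 'm"
    and a b a' b' d :: nat
  assumes "Modules.module sN"
    and "injective_presentation sN P a b \<pi>"
    and "injective_presentation sN P' a' b' \<pi>'"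
    and "b = a + d" and "b' = a' + d"
  shows "(\<forall>u U V. is_lift \<pi> b d u U \<longrightarrow> is_lift \<pi> b d u V \<longrightarrow>
             det_augmented P a b U = det_augmented P a b V)
       \<and> (\<forall>u U V. is_lift \<pi>' b' d u U \<longrightarrow> is_lift \<pi>' b' d u V \<longrightarrow>
             det_augmented P' a' b' U = det_augmented P' a' b' V)
       \<and> (\<exists>\<epsilon>::int. \<exists>g::'n \<Rightarrow>\<^sub>0 int. (\<epsilon> = 1 \<or> \<epsilon> = -1) \<and>
            (\<forall>u. alexander_fun P' \<pi>' a' b' d u
                   = Poly_Mapping.single g \<epsilon> * alexander_fun P \<pi> a b d u))"
proof -
  have pr: "pres \<pi> P a b" by (rule inj_pres_pres[OF assms(2)])
  have pr': "pres \<pi>' P' a' b'" by (rule inj_pres_pres[OF assms(3)])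
  have addA: "\<forall>v\<in>carrier_vec b. \<forall>w\<in>carrier_vec b. \<pi> (v + w) = \<pi> v + \<pi> w"
    and smulA: "\<forall>r. \<forall>v\<in>carrier_vec b. \<pi> (r \<cdot>\<^sub>v v) = sN r (\<pi> v)"
    and surj: "\<pi> ` carrier_vec b = UNIV"
    using assms(2) unfolding injective_presentation_def by auto
  have addB: "\<forall>v\<in>carrier_vec b'. \<forall>w\<in>carrier_vec b'. \<pi>' (v + w) = \<pi>' v + \<pi>' w"
    and smulB: "\<forall>r. \<forall>v\<in>carrier_vec b'. \<pi>' (r \<cdot>\<^sub>v v) = sN r (\<pi>' v)"
    and surj': "\<pi>' ` carrier_vec b' = UNIV"
    using assms(3) unfolding injective_presentation_def by auto
  obtain A where A: "A \<in> carrier_mat b b'" "\<forall>y\<in>carrier_vec b'. \<pi> (A *\<^sub>v y) = \<pi>' y"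
    using lift_mat[OF addA smulA surj addB smulB] by blast
  obtain B where B: "B \<in> carrier_mat b' b" "\<forall>y\<in>carrier_vec b. \<pi>' (B *\<^sub>v y) = \<pi> y"
    using lift_mat[OF addB smulB surj' addA smulA] by blast
  obtain c e where ce: "c * e = 1" and mn: "\<forall>u U U'. is_lift \<pi> b d u U \<longrightarrow> is_lift \<pi>' b' d u U' \<longrightarrow>
            det_augmented P' a' b' U' = c * det_augmented P a b U"
    using main3[OF pr pr' assms(4,5) A(1) B(1)] A(2) B(2) by blast
  obtain g \<epsilon> where g: "\<epsilon> = 1 \<or> \<epsilon> = -1" "c = Poly_Mapping.single g \<epsilon>"
    using grpring_unit[OF ce] by blast
  show ?thesis
  proof (intro conjI)
    show "\<forall>u U V. is_lift \<pi> b d u U \<longrightarrow> is_lift \<pi> b d u V \<longrightarrow>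
             det_augmented P a b U = det_augmented P a b V"
      using welldef[OF pr assms(4)] by blast
    show "\<forall>u U V. is_lift \<pi>' b' d u U \<longrightarrow> is_lift \<pi>' b' d u V \<longrightarrow>
             det_augmented P' a' b' U = det_augmented P' a' b' V"
      using welldef[OF pr' assms(5)] by blast
    show "\<exists>\<epsilon>::int. \<exists>g::'n \<Rightarrow>\<^sub>0 int. (\<epsilon> = 1 \<or> \<epsilon> = -1) \<and>
            (\<forall>u. alexander_fun P' \<pi>' a' b' d u
                   = Poly_Mapping.single g \<epsilon> * alexander_fun P \<pi> a b d u)"
    proof (intro exI conjI allI)
      show "\<epsilon> = 1 \<or> \<epsilon> = -1" by (rule g(1))
      fix u
      have l1: "is_lift \<pi> b d u (SOME U. is_lift \<pi> b d u U)"
        using someI_ex[OF lift_ex[OF surj]] .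
      have l2: "is_lift \<pi>' b' d u (SOME U. is_lift \<pi>' b' d u U)"
        using someI_ex[OF lift_ex[OF surj']] .
      show "alexander_fun P' \<pi>' a' b' d u = Poly_Mapping.single g \<epsilon> * alexander_fun P \<pi> a b d u"
        unfolding alexander_fun_def g(2)[symmetric] using mn l1 l2 by blast
    qed
  qed
qed

end
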